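(* Let $(\ell_n)_{n\in\mathbb N}$, $(\sigma_{n,0})_{n\in\mathbb N}$, $(\sigma_{n,1})_{n\in\mathbb N}$, $(\sigma_{n,-1})_{n\in\mathbb N}$ be sequences of strictly positive real numbers and let $(\kappa_n)_{n\in\mathbb N}$ be a sequence of real numbers. Then for every $x_0\in\mathbb R$ there exists at least one $x_1>0$ such that the sequence $(x_n)_{n\in\mathbb N}$ determined by $$\ell_n = x_n\big(\sigma_{n,1}x_{n+1}+\sigma_{n,0}x_n+\sigma_{n,-1}x_{n-1}\big)+\kappa_n x_n,\qquad n\in\mathbb N,$$ is well defined and positive, i.e. $x_n>0$ for all $n\in\mathbb N$.
   Context: $\mathbb N=\{1,2,3,\dots\}$. Since $\sigma_{n,1}>0$, the displayed equation, given $x_{n-1}$ and $x_n\neq 0$, determines $x_{n+1}$ uniquely; thus the sequence is determined recursively by $x_0$ and $x_1$ as long as no term $x_n$ with $n\ge 1$ vanishes. *)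

theory Defs
  imports Complex_Main
begin

end

theory Submission
  imports Defs
begin

lemma big_lem:
  fixes l k s0 s1 sm K T :: real
  assumes "l > 0" "s0 > 0" "s1 > 0" "sm > 0" "K \<ge> 0"
  shows "\<exists>\<delta>>0. \<forall>f g. 0 < f \<longrightarrow> f < \<delta> \<longrightarrow> \<bar>g\<bar> \<le> K \<longrightarrow>
           (l / f - k - s0 * f - sm * g) / s1 > T"
proof -
  define C where "C = \<bar>s1*T\<bar> + \<bar>k\<bar> + s0 + sm*K + 1"
  have C: "C > 0" using assms unfolding C_def by (smt (verit) mult_nonneg_nonneg)
  define \<delta> where "\<delta> = min 1 (l / C)"
  have d: "\<delta> > 0" using assms C unfolding \<delta>_def by simp
  show ?thesis
  proof (intro exI[of _ \<delta>] conjI allI impI d)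
    fix f g :: real assume f: "0 < f" "f < \<delta>" and g: "\<bar>g\<bar> \<le> K"
    have f1: "f < 1" "f < l / C" using f unfolding \<delta>_def by auto
    have "f * C < l" using f1(2) C by (simp add: field_simps)
    hence lf: "l / f > C" using f by (simp add: field_simps)
    have "s0 * f \<le> s0" using f1 assms by simp
    moreover have "sm * g \<le> sm * K" using g assms by (simp add: abs_le_iff)
    ultimately have "l / f - k - s0 * f - sm * g > s1 * T"
      using lf unfolding C_def by linarith
    thus "(l / f - k - s0 * f - sm * g) / s1 > T" using assms by (simp add: field_simps)
  qed
qed

lemma neg_lem:
  fixes l k s0 s1 sm :: real
  assumes "l > 0" "s0 > 0" "s1 > 0" "sm > 0"
  shows "\<exists>T. \<forall>h f. h \<ge> T \<longrightarrow> f > 0 \<longrightarrow> (l / h - k - s0 * h - sm * f) / s1 < 0"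
proof (intro exI[of _ "(l + \<bar>k\<bar>)/s0 + 1"] allI impI)
  fix h f :: real assume h: "h \<ge> (l + \<bar>k\<bar>)/s0 + 1" and f: "f > 0"
  have h1: "h \<ge> 1" using h assms by (smt (verit) divide_nonneg_pos)
  have "l / h \<le> l" using h1 assms by (simp add: divide_le_eq)
  moreover have "s0 * h \<ge> l + \<bar>k\<bar> + s0" using h assms by (simp add: field_simps)
  moreover have "sm * f > 0" using assms f by simp
  ultimately have "l / h - k - s0 * h - sm * f < 0" using abs_ge_minus_self[of k] assms by linarith
  thus "(l / h - k - s0 * h - sm * f) / s1 < 0" using assms by (simp add: divide_neg_pos)
qed

lemma bnd_lem:
  fixes l k s0 s1 sm K f g :: real
  assumes "l > 0" "s0 > 0" "s1 > 0" "sm > 0" "f > 0" "\<bar>g\<bar> \<le> K"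
    "(l / f - k - s0 * f - sm * g) / s1 > 0"
  shows "f \<le> max 1 ((l + \<bar>k\<bar> + sm * K) / s0)"
proof (cases "f \<le> 1")
  case False
  have "l / f < l" using False assms by (simp add: divide_less_eq)
  moreover have "l / f - k - s0 * f - sm * g > 0" using assms by (simp add: zero_less_divide_iff)
  moreover have "sm * g \<ge> - (sm * K)" using assms by (smt (verit) abs_le_iff mult_left_mono mult_minus_right)
  ultimately have "s0 * f < l + \<bar>k\<bar> + sm * K" by linarith
  hence "f < (l + \<bar>k\<bar> + sm * K) / s0" using assms by (simp add: field_simps)
  thus ?thesis by simp
qed simp

context
  fixes l s0 s1 sm kappa :: "nat \<Rightarrow> real" and x0 :: real
  assumes lpos: "\<forall>n\<ge>1. l n > 0"
    and s0pos: "\<forall>n\<ge>1. s0 n > 0"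
    and s1pos: "\<forall>n\<ge>1. s1 n > 0"
    and smpos: "\<forall>n\<ge>1. sm n > 0"
begin

fun X :: "nat \<Rightarrow> real \<Rightarrow> real" where
  "X 0 y = x0"
| "X (Suc 0) y = y"
| "X (Suc (Suc n)) y = (l (Suc n) / X (Suc n) y - kappa (Suc n) - s0 (Suc n) * X (Suc n) y
      - sm (Suc n) * X n y) / s1 (Suc n)"

lemma X_rec: "n \<ge> 1 \<Longrightarrow> X (Suc n) y =
   (l n / X n y - kappa n - s0 n * X n y - sm n * X (n-1) y) / s1 n"
  by (cases n) auto

lemma X_cont: "(\<forall>y\<in>S. \<forall>j. 1 \<le> j \<and> j < k \<longrightarrow> X j y \<noteq> 0) \<Longrightarrow> continuous_on S (\<lambda>y. X k y)"
proof (induction k rule: less_induct)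
  case (less k)
  show ?case
  proof (cases k)
    case 0 then show ?thesis by (simp add: continuous_on_const)
  next
    case (Suc m)
    show ?thesis
    proof (cases m)
      case 0 then show ?thesis using Suc by (simp add: continuous_on_id)
    next
      case (Suc m')
      have kk: "k = Suc (Suc m')" using Suc \<open>k = Suc m\<close> by simp
      have c1: "continuous_on S (\<lambda>y. X (Suc m') y)"
      proof (rule less.IH)
        show "Suc m' < k" using kk by simp
        show "\<forall>y\<in>S. \<forall>j. 1 \<le> j \<and> j < Suc m' \<longrightarrow> X j y \<noteq> 0"
          using less.prems kk by (meson less_SucI)
      qed
      have c2: "continuous_on S (\<lambda>y. X m' y)"
      proof (rule less.IH)
        show "m' < k" using kk by simp
        show "\<forall>y\<in>S. \<forall>j. 1 \<le> j \<and> j < m' \<longrightarrow> X j y \<noteq> 0"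
          using less.prems kk by (meson less_SucI)
      qed
      have nz: "\<forall>y\<in>S. X (Suc m') y \<noteq> 0" using less.prems kk by simp
      have "s1 (Suc m') \<noteq> 0" using s1pos[rule_format, of "Suc m'"] by simp
      then show ?thesis unfolding kk X.simps using c1 c2 nz
        by (intro continuous_intros) auto
    qed
  qed
qed

definition Inv :: "nat \<Rightarrow> real \<Rightarrow> real \<Rightarrow> bool" where
  "Inv n a b \<longleftrightarrow> 0 \<le> a \<and> a < b \<and> (\<forall>y\<in>{a<..<b}. \<forall>j\<in>{1..n}. X j y > 0)
     \<and> (\<exists>K. \<forall>y\<in>{a<..<b}. \<bar>X (n-1) y\<bar> \<le> K)
     \<and> (((\<lambda>y. X n y) \<longlongrightarrow> 0) (at_right a) \<or> ((\<lambda>y. X n y) \<longlongrightarrow> 0) (at_left b))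
     \<and> (\<exists>p\<in>{a<..<b}. X (Suc n) p < 0)"

lemma step:
  assumes "Inv n a b" "n \<ge> 1"
  shows "\<exists>a' b'. Inv (Suc n) a' b' \<and> a < a' \<and> b' < b"
proof -
  from assms obtain K p where a0: "0 \<le> a" "a < b"
    and pos: "\<forall>y\<in>{a<..<b}. \<forall>j\<in>{1..n}. X j y > 0"
    and K: "\<forall>y\<in>{a<..<b}. \<bar>X (n-1) y\<bar> \<le> K"
    and ends: "((\<lambda>y. X n y) \<longlongrightarrow> 0) (at_right a) \<or> ((\<lambda>y. X n y) \<longlongrightarrow> 0) (at_left b)"
    and p: "p \<in> {a<..<b}" "X (Suc n) p < 0"
    unfolding Inv_def by blast
  have K0: "K \<ge> 0" using K[rule_format, OF p(1)] by (meson abs_ge_zero order.trans)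
  have pn: "l n > 0" "s0 n > 0" "s1 n > 0" "sm n > 0"
    using assms(2) lpos s0pos s1pos smpos by auto
  have pn': "l (Suc n) > 0" "s0 (Suc n) > 0" "s1 (Suc n) > 0" "sm (Suc n) > 0"
    using lpos s0pos s1pos smpos by auto
  have hrec: "\<And>y. X (Suc n) y = (l n / X n y - kappa n - s0 n * X n y - sm n * X (n-1) y) / s1 n"
    using X_rec assms(2) by blast
  have hhrec: "\<And>y. X (Suc (Suc n)) y = (l (Suc n) / X (Suc n) y - kappa (Suc n)
      - s0 (Suc n) * X (Suc n) y - sm (Suc n) * X n y) / s1 (Suc n)"
    using X_rec[of "Suc n"] by simp
  have Xn: "\<And>y. y \<in> {a<..<b} \<Longrightarrow> X n y > 0" using pos assms(2) by auto
  have cont: "continuous_on {a<..<b} (\<lambda>y. X (Suc n) y)"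
  proof (rule X_cont, intro ballI allI impI)
    fix y j assume yj: "y \<in> {a<..<b}" "1 \<le> j \<and> j < Suc n"
    have "X j y > 0" using pos yj by auto
    thus "X j y \<noteq> 0" by simp
  qed
  have isc: "\<And>y. y \<in> {a<..<b} \<Longrightarrow> isCont (\<lambda>y. X (Suc n) y) y"
    by (rule continuous_on_eq_continuous_at[OF open_greaterThanLessThan, THEN iffD1, OF cont, rule_format])
  obtain T where T: "\<forall>h f. h \<ge> T \<longrightarrow> f > 0 \<longrightarrow>
     (l (Suc n) / h - kappa (Suc n) - s0 (Suc n) * h - sm (Suc n) * f) / s1 (Suc n) < 0"
    using neg_lem[OF pn'] by blast
  define B where "B = max 1 ((l n + \<bar>kappa n\<bar> + sm n * K) / s0 n)"
  have bnd: "\<And>y. y \<in> {a<..<b} \<Longrightarrow> X (Suc n) y > 0 \<Longrightarrow> \<bar>X n y\<bar> \<le> B"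
  proof -
    fix y assume y: "y \<in> {a<..<b}" "X (Suc n) y > 0"
    have "X n y \<le> B" unfolding B_def
      by (rule bnd_lem[OF pn Xn[OF y(1)] K[rule_format, OF y(1)]]) (use y(2) in \<open>simp only: hrec\<close>)
    thus "\<bar>X n y\<bar> \<le> B" using Xn[OF y(1)] by simp
  qed
  have big: "\<And>T. \<exists>\<delta>>0. \<forall>y\<in>{a<..<b}. X n y < \<delta> \<longrightarrow> X (Suc n) y > T"
  proof -
    fix T
    have ex: "\<exists>\<delta>>0. \<forall>f g. 0 < f \<longrightarrow> f < \<delta> \<longrightarrow> \<bar>g\<bar> \<le> K \<longrightarrow>
           (l n / f - kappa n - s0 n * f - sm n * g) / s1 n > T"
      by (rule big_lem[OF pn K0])
    then obtain \<delta> where d: "\<delta> > 0" and dd: "\<forall>f g. 0 < f \<longrightarrow> f < \<delta> \<longrightarrow> \<bar>g\<bar> \<le> K \<longrightarrow>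
           (l n / f - kappa n - s0 n * f - sm n * g) / s1 n > T"
      by (elim exE conjE)
    show "\<exists>\<delta>>0. \<forall>y\<in>{a<..<b}. X n y < \<delta> \<longrightarrow> X (Suc n) y > T"
    proof (intro exI[of _ \<delta>] conjI ballI impI d)
      fix y assume y: "y \<in> {a<..<b}" and yd: "X n y < \<delta>"
      show "X (Suc n) y > T" unfolding hrec
        using dd[rule_format, OF Xn[OF y] yd K[rule_format, OF y]] .
    qed
  qed
  from ends show ?thesis
  proof
    assume lim: "((\<lambda>y. X n y) \<longlongrightarrow> 0) (at_right a)"
    have ev: "\<And>T. \<exists>d. a < d \<and> d \<le> b \<and> (\<forall>y. a < y \<and> y < d \<longrightarrow> X (Suc n) y > T)"
    proof -
      fix T
      obtain \<delta> where d: "\<delta> > 0" "\<forall>y\<in>{a<..<b}. X n y < \<delta> \<longrightarrow> X (Suc n) y > T"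
        using big by blast
      have "eventually (\<lambda>y. X n y < \<delta>) (at_right a)"
        using order_tendstoD(2)[OF lim d(1)] .
      then obtain b0 where b0: "b0 > a" "\<forall>y>a. y < b0 \<longrightarrow> X n y < \<delta>"
        unfolding eventually_at_right_field by blast
      show "\<exists>d. a < d \<and> d \<le> b \<and> (\<forall>y. a < y \<and> y < d \<longrightarrow> X (Suc n) y > T)"
        using b0 d a0 by (intro exI[of _ "min b0 b"]) auto
    qed
    obtain d where d: "a < d" "d \<le> b" "\<forall>y. a < y \<and> y < d \<longrightarrow> X (Suc n) y > 0"
      using ev[of 0] by blast
    have dp: "d \<le> p" using p d by (meson greaterThanLessThan_iff less_asym not_le)
    define S where "S = {y. a < y \<and> y \<le> p \<and> X (Suc n) y \<le> 0}"
    define z where "z = Inf S"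
    have pS: "p \<in> S" using p unfolding S_def by auto
    have Slow: "\<forall>s\<in>S. d \<le> s"
    proof
      fix s assume "s \<in> S"
      hence s: "a < s" "X (Suc n) s \<le> 0" unfolding S_def by auto
      show "d \<le> s"
      proof (rule ccontr)
        assume "\<not> d \<le> s"
        hence "X (Suc n) s > 0" using d(3) s(1) by simp
        thus False using s(2) by simp
      qed
    qed
    have bddS: "bdd_below S" using Slow by (auto intro: bdd_belowI)
    have zd: "d \<le> z" unfolding z_def by (rule cInf_greatest) (use pS Slow in auto)
    have zp: "z \<le> p" unfolding z_def using pS bddS by (rule cInf_lower)
    have zlow: "\<And>s. s \<in> S \<Longrightarrow> z \<le> s" unfolding z_def using bddS by (simp add: cInf_lower)
    have below: "\<forall>y. a < y \<and> y < z \<longrightarrow> X (Suc n) y > 0"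
    proof (intro allI impI)
      fix y assume y: "a < y \<and> y < z"
      show "X (Suc n) y > 0"
      proof (rule ccontr)
        assume "\<not> X (Suc n) y > 0"
        hence "y \<in> S" using y zp unfolding S_def by auto
        thus False using zlow y by fastforce
      qed
    qed
    have zJ: "z \<in> {a<..<b}" using zd zp d p by auto
    have hz_le: "X (Suc n) z \<le> 0"
    proof (rule ccontr)
      assume "\<not> X (Suc n) z \<le> 0"
      hence hz: "X (Suc n) z > 0" by simp
      have "eventually (\<lambda>y. X (Suc n) y > 0) (at z)"
        using order_tendstoD(1)[OF isc[OF zJ, unfolded isCont_def] hz] .
      then obtain e where e: "e > 0" "\<forall>y. y \<noteq> z \<and> dist y z < e \<longrightarrow> X (Suc n) y > 0"
        unfolding eventually_at by auto
      have "\<forall>s\<in>S. z + e \<le> s"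
      proof
        fix s assume s: "s \<in> S"
        have "z \<le> s" using zlow s .
        moreover have "X (Suc n) s \<le> 0" using s unfolding S_def by auto
        ultimately show "z + e \<le> s" using e hz by (smt (verit) dist_real_def)
      qed
      hence "z + e \<le> z" unfolding z_def by (intro cInf_greatest) (use pS in auto)
      thus False using e by simp
    qed
    have limz0: "((\<lambda>y. X (Suc n) y) \<longlongrightarrow> X (Suc n) z) (at_left z)"
      using isc[OF zJ] unfolding isCont_def filterlim_at_split by blast
    have "eventually (\<lambda>y. 0 \<le> X (Suc n) y) (at_left z)"
      unfolding eventually_at_left_field using zJ below
      by (intro exI[of _ a]) (auto intro: less_imp_le)
    hence hz_ge: "0 \<le> X (Suc n) z"
      using tendsto_lowerbound[OF limz0] by simp
    have limz: "((\<lambda>y. X (Suc n) y) \<longlongrightarrow> 0) (at_left z)"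
      using limz0 hz_le hz_ge by simp
    obtain d2 where d2: "a < d2" "d2 \<le> b" "\<forall>y. a < y \<and> y < d2 \<longrightarrow> X (Suc n) y > T"
      using ev[of T] by blast
    define p' where "p' = (a + min d2 z) / 2"
    define a' where "a' = (a + p') / 2"
    have p'1: "a < p'" "p' < z" "p' < d2" using d2 zd d unfolding p'_def by auto
    have a'1: "a < a'" "a' < p'" using p'1 unfolding a'_def by auto
    have "X (Suc (Suc n)) p' < 0"
      using hhrec[of p'] T d2(3) p'1 Xn[of p'] zJ by (smt (verit) greaterThanLessThan_iff)
    have "Inv (Suc n) a' z"
      unfolding Inv_def
    proof (intro conjI)
      show "0 \<le> a'" using a0 a'1 by simp
      show "a' < z" using a'1 p'1 by simp
      show "\<forall>y\<in>{a'<..<z}. \<forall>j\<in>{1..Suc n}. 0 < X j y"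
      proof (intro ballI)
        fix y j assume y: "y \<in> {a'<..<z}" and j: "j \<in> {1..Suc n}"
        have yJ: "y \<in> {a<..<b}" using y a'1 zJ by auto
        show "0 < X j y"
        proof (cases "j = Suc n")
          case True thus ?thesis using below y a'1 by auto
        next
          case False thus ?thesis using pos yJ j by auto
        qed
      qed
      show "\<exists>K. \<forall>y\<in>{a'<..<z}. \<bar>X (Suc n - 1) y\<bar> \<le> K"
        using bnd below a'1 zJ by (intro exI[of _ B]) auto
      show "((\<lambda>y. X (Suc n) y) \<longlongrightarrow> 0) (at_right a') \<or> ((\<lambda>y. X (Suc n) y) \<longlongrightarrow> 0) (at_left z)"
        using limz by simp
      show "\<exists>p\<in>{a'<..<z}. X (Suc (Suc n)) p < 0"
        using \<open>X (Suc (Suc n)) p' < 0\<close> a'1 p'1 by auto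
    qed
    thus ?thesis using a'1 zp p by (intro exI[of _ a'] exI[of _ z]) auto
  next
    assume lim: "((\<lambda>y. X n y) \<longlongrightarrow> 0) (at_left b)"
    have ev: "\<And>T. \<exists>d. a \<le> d \<and> d < b \<and> (\<forall>y. d < y \<and> y < b \<longrightarrow> X (Suc n) y > T)"
    proof -
      fix T
      obtain \<delta> where d: "\<delta> > 0" "\<forall>y\<in>{a<..<b}. X n y < \<delta> \<longrightarrow> X (Suc n) y > T"
        using big by blast
      have "eventually (\<lambda>y. X n y < \<delta>) (at_left b)"
        using order_tendstoD(2)[OF lim d(1)] .
      then obtain b0 where b0: "b0 < b" "\<forall>y>b0. y < b \<longrightarrow> X n y < \<delta>"
        unfolding eventually_at_left_field by blast
      show "\<exists>d. a \<le> d \<and> d < b \<and> (\<forall>y. d < y \<and> y < b \<longrightarrow> X (Suc n) y > T)"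
        using b0 d a0 by (intro exI[of _ "max b0 a"]) auto
    qed
    obtain d where d: "a \<le> d" "d < b" "\<forall>y. d < y \<and> y < b \<longrightarrow> X (Suc n) y > 0"
      using ev[of 0] by blast
    have dp: "p \<le> d"
    proof (rule ccontr)
      assume "\<not> p \<le> d"
      hence "X (Suc n) p > 0" using d(3) p(1) by simp
      thus False using p(2) by simp
    qed
    define S where "S = {y. p \<le> y \<and> y < b \<and> X (Suc n) y \<le> 0}"
    define z where "z = Sup S"
    have pS: "p \<in> S" using p unfolding S_def by auto
    have Shigh: "\<forall>s\<in>S. s \<le> d"
    proof
      fix s assume "s \<in> S"
      hence s: "s < b" "X (Suc n) s \<le> 0" unfolding S_def by auto
      show "s \<le> d"
      proof (rule ccontr)
        assume "\<not> s \<le> d"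
        hence "X (Suc n) s > 0" using d(3) s(1) by simp
        thus False using s(2) by simp
      qed
    qed
    have bddS: "bdd_above S" using Shigh by (auto intro: bdd_aboveI)
    have zd: "z \<le> d" unfolding z_def by (rule cSup_least) (use pS Shigh in auto)
    have zup: "\<And>s. s \<in> S \<Longrightarrow> s \<le> z" unfolding z_def using bddS by (simp add: cSup_upper)
    have pz: "p \<le> z" using zup pS .
    have above: "\<forall>y. z < y \<and> y < b \<longrightarrow> X (Suc n) y > 0"
    proof (intro allI impI)
      fix y assume y: "z < y \<and> y < b"
      show "X (Suc n) y > 0"
      proof (rule ccontr)
        assume "\<not> X (Suc n) y > 0"
        hence "y \<in> S" using y pz unfolding S_def by auto
        thus False using zup y by fastforce
      qed
    qed
    have zJ: "z \<in> {a<..<b}" using zd pz d p by auto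
    have hz_le: "X (Suc n) z \<le> 0"
    proof (rule ccontr)
      assume "\<not> X (Suc n) z \<le> 0"
      hence hz: "X (Suc n) z > 0" by simp
      have "eventually (\<lambda>y. X (Suc n) y > 0) (at z)"
        using order_tendstoD(1)[OF isc[OF zJ, unfolded isCont_def] hz] .
      then obtain e where e: "e > 0" "\<forall>y. y \<noteq> z \<and> dist y z < e \<longrightarrow> X (Suc n) y > 0"
        unfolding eventually_at by auto
      have "\<forall>s\<in>S. s \<le> z - e"
      proof
        fix s assume s: "s \<in> S"
        have "s \<le> z" using zup s .
        moreover have "X (Suc n) s \<le> 0" using s unfolding S_def by auto
        ultimately show "s \<le> z - e" using e hz by (smt (verit) dist_real_def)
      qed
      hence "z \<le> z - e" unfolding z_def by (intro cSup_least) (use pS in auto)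
      thus False using e by simp
    qed
    have limz0: "((\<lambda>y. X (Suc n) y) \<longlongrightarrow> X (Suc n) z) (at_right z)"
      using isc[OF zJ] unfolding isCont_def filterlim_at_split by blast
    have "eventually (\<lambda>y. 0 \<le> X (Suc n) y) (at_right z)"
      unfolding eventually_at_right_field using zJ above
      by (intro exI[of _ b]) (auto intro: less_imp_le)
    hence hz_ge: "0 \<le> X (Suc n) z"
      using tendsto_lowerbound[OF limz0] by simp
    have limz: "((\<lambda>y. X (Suc n) y) \<longlongrightarrow> 0) (at_right z)"
      using limz0 hz_le hz_ge by simp
    obtain d2 where d2: "a \<le> d2" "d2 < b" "\<forall>y. d2 < y \<and> y < b \<longrightarrow> X (Suc n) y > T"
      using ev[of T] by blast
    define p' where "p' = (max d2 z + b) / 2"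
    define b' where "b' = (p' + b) / 2"
    have p'1: "p' < b" "z < p'" "d2 < p'" using d2 zd d unfolding p'_def by auto
    have b'1: "b' < b" "p' < b'" using p'1 unfolding b'_def by auto
    have "X (Suc (Suc n)) p' < 0"
      using hhrec[of p'] T d2(3) p'1 Xn[of p'] zJ by (smt (verit) greaterThanLessThan_iff)
    have "Inv (Suc n) z b'"
      unfolding Inv_def
    proof (intro conjI)
      show "0 \<le> z" using a0 zJ by simp
      show "z < b'" using b'1 p'1 by simp
      show "\<forall>y\<in>{z<..<b'}. \<forall>j\<in>{1..Suc n}. 0 < X j y"
      proof (intro ballI)
        fix y j assume y: "y \<in> {z<..<b'}" and j: "j \<in> {1..Suc n}"
        have yJ: "y \<in> {a<..<b}" using y b'1 zJ by auto
        show "0 < X j y"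
        proof (cases "j = Suc n")
          case True thus ?thesis using above y b'1 by auto
        next
          case False thus ?thesis using pos yJ j by auto
        qed
      qed
      show "\<exists>K. \<forall>y\<in>{z<..<b'}. \<bar>X (Suc n - 1) y\<bar> \<le> K"
        using bnd above b'1 zJ by (intro exI[of _ B]) auto
      show "((\<lambda>y. X (Suc n) y) \<longlongrightarrow> 0) (at_right z) \<or> ((\<lambda>y. X (Suc n) y) \<longlongrightarrow> 0) (at_left b')"
        using limz by simp
      show "\<exists>p\<in>{z<..<b'}. X (Suc (Suc n)) p < 0"
        using \<open>X (Suc (Suc n)) p' < 0\<close> b'1 p'1 by auto
    qed
    thus ?thesis using b'1 pz p by (intro exI[of _ z] exI[of _ b']) auto
  qed
qed


lemma base: "\<exists>b. Inv 1 0 b"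
proof -
  have pn: "l 1 > 0" "s0 1 > 0" "s1 1 > 0" "sm 1 > 0" using lpos s0pos s1pos smpos by auto
  define p where "p = (l 1 + \<bar>kappa 1\<bar> + sm 1 * \<bar>x0\<bar>) / s0 1 + 1"
  have q: "(l 1 + \<bar>kappa 1\<bar> + sm 1 * \<bar>x0\<bar>) / s0 1 \<ge> 0" using pn by simp
  have p1: "p \<ge> 1" unfolding p_def using q by simp
  have "l 1 / p \<le> l 1" using p1 pn by (simp add: divide_le_eq)
  moreover have "s0 1 * p \<ge> l 1 + \<bar>kappa 1\<bar> + sm 1 * \<bar>x0\<bar> + s0 1" using pn unfolding p_def
    by (simp add: field_simps)
  moreover have "sm 1 * x0 \<ge> - (sm 1 * \<bar>x0\<bar>)" using pn
    by (smt (verit) abs_ge_minus_self mult_left_mono mult_minus_right)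
  ultimately have "l 1 / p - kappa 1 - s0 1 * p - sm 1 * x0 < 0"
    using abs_ge_minus_self[of "kappa 1"] pn by linarith
  hence X2: "X 2 p < 0" using pn by (simp add: numeral_2_eq_2 divide_neg_pos)
  have "Inv 1 0 (p + 1)" unfolding Inv_def
  proof (intro conjI)
    show "(0::real) \<le> 0" by simp
    show "0 < p + 1" using p1 by simp
    show "\<forall>y\<in>{0<..<p + 1}. \<forall>j\<in>{1..1}. 0 < X j y" by simp
    show "\<exists>K. \<forall>y\<in>{0<..<p + 1}. \<bar>X (1 - 1) y\<bar> \<le> K" by (intro exI[of _ "\<bar>x0\<bar>"]) simp
    show "((\<lambda>y. X 1 y) \<longlongrightarrow> 0) (at_right 0) \<or> ((\<lambda>y. X 1 y) \<longlongrightarrow> 0) (at_left (p + 1))"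
      by simp
    show "\<exists>pa\<in>{0<..<p + 1}. X (Suc 1) pa < 0"
      using X2 p1 by (intro bexI[of _ p]) (auto simp: numeral_2_eq_2)
  qed
  thus ?thesis by blast
qed

lemma main: "\<exists>x1>0. \<exists>x::nat\<Rightarrow>real. x 0 = x0 \<and> x 1 = x1 \<and>
    (\<forall>n\<ge>1. l n = x n * (s1 n * x (n + 1) + s0 n * x n + sm n * x (n - 1)) + kappa n * x n) \<and>
    (\<forall>n\<ge>1. x n > 0)"
proof -
  have "\<exists>f. \<forall>n. (\<lambda>n ab. Inv (Suc n) (fst ab) (snd ab)) n (f n) \<and>
      (\<lambda>n ab ab'. fst ab < fst ab' \<and> snd ab' < snd ab) n (f n) (f (Suc n))"
  proof (rule dependent_nat_choice)
    show "\<exists>x. Inv (Suc 0) (fst x) (snd x)" using base by auto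
  next
    fix x :: "real \<times> real" and n
    assume "Inv (Suc n) (fst x) (snd x)"
    then obtain a' b' where "Inv (Suc (Suc n)) a' b'" "fst x < a'" "b' < snd x"
      using step[of "Suc n" "fst x" "snd x"] by auto
    thus "\<exists>y. Inv (Suc (Suc n)) (fst y) (snd y) \<and> fst x < fst y \<and> snd y < snd x"
      by (intro exI[of _ "(a', b')"]) auto
  qed
  then obtain f where f: "\<And>n. Inv (Suc n) (fst (f n)) (snd (f n))"
    "\<And>n. fst (f n) < fst (f (Suc n))" "\<And>n. snd (f (Suc n)) < snd (f n)" by blast
  define a where "a = (\<lambda>n. fst (f n))"
  define b where "b = (\<lambda>n. snd (f n))"
  have inv: "\<And>n. Inv (Suc n) (a n) (b n)" using f(1) unfolding a_def b_def by simp
  have am: "\<And>n. a n < a (Suc n)" using f(2) unfolding a_def by simp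
  have bm: "\<And>n. b (Suc n) < b n" using f(3) unfolding b_def by simp
  have ab: "\<And>n. a n < b n" using inv unfolding Inv_def by blast
  have amono: "\<And>m n. m \<le> n \<Longrightarrow> a m \<le> a n"
    by (rule lift_Suc_mono_le[of a]) (use am less_imp_le in auto)
  have bmono: "\<And>m n. m \<le> n \<Longrightarrow> b n \<le> b m"
    by (rule lift_Suc_antimono_le[of b]) (use bm less_imp_le in auto)
  have abmn: "\<And>n m. a n \<le> b m"
  proof -
    fix n m
    have "a n \<le> a (max n m)" by (rule amono) simp
    also have "\<dots> \<le> b (max n m)" using ab less_imp_le by blast
    also have "\<dots> \<le> b m" by (rule bmono) simp
    finally show "a n \<le> b m" .
  qed
  define A where "A = (SUP n. a n)"
  have bdd: "bdd_above (range a)" by (rule bdd_aboveI[of _ "b 0"]) (use abmn in auto)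
  have aA: "\<And>n. a n \<le> A" unfolding A_def using bdd by (simp add: cSUP_upper)
  have Ab: "\<And>m. A \<le> b m" unfolding A_def by (rule cSUP_least) (use abmn in auto)
  have AJ: "\<And>n. A \<in> {a n<..<b n}"
    using aA[of "Suc _"] Ab[of "Suc _"] am bm by (meson greaterThanLessThan_iff order_less_le_trans order_le_less_trans)
  have Xpos: "\<And>j. j \<ge> 1 \<Longrightarrow> X j A > 0"
  proof -
    fix j :: nat assume j: "j \<ge> 1"
    have "\<forall>y\<in>{a j<..<b j}. \<forall>i\<in>{1..Suc j}. X i y > 0" using inv[of j] unfolding Inv_def by blast
    thus "X j A > 0" using AJ[of j] j by auto
  qed
  have A0: "A > 0" using Xpos[of 1] by simp
  show ?thesis
  proof (intro exI[of _ A] conjI exI[of _ "\<lambda>n. X n A"] allI impI A0)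
    show "X 0 A = x0" by simp
    show "X 1 A = A" by simp
    show "\<And>n. 1 \<le> n \<Longrightarrow> 0 < X n A" using Xpos by blast
    fix n :: nat assume n: "1 \<le> n"
    have xn: "X n A \<noteq> 0" using Xpos[OF n] by simp
    have s1n: "s1 n \<noteq> 0" using s1pos n by (simp add: less_imp_neq[symmetric])
    have r: "X (Suc n) A = (l n / X n A - kappa n - s0 n * X n A - sm n * X (n-1) A) / s1 n"
      by (rule X_rec[OF n])
    have "s1 n * X (Suc n) A = l n / X n A - kappa n - s0 n * X n A - sm n * X (n-1) A"
      using r s1n by simp
    hence "X n A * (s1 n * X (Suc n) A) = l n - kappa n * X n A - s0 n * X n A * X n A - sm n * X (n-1) A * X n A"
      using xn by (simp add: field_simps)
    thus "l n = X n A * (s1 n * X (n + 1) A + s0 n * X n A + sm n * X (n - 1) A) + kappa n * X n A"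
      by (simp add: algebra_simps)
  qed
qed

end


theorem theorem4p1:
  fixes l s0 s1 sm kappa :: "nat \<Rightarrow> real"
  assumes "\<forall>n\<ge>1. l n > 0"
    and "\<forall>n\<ge>1. s0 n > 0"
    and "\<forall>n\<ge>1. s1 n > 0"
    and "\<forall>n\<ge>1. sm n > 0"
  shows "\<forall>x0::real. \<exists>x1>0. \<exists>x :: nat \<Rightarrow> real.
           x 0 = x0 \<and> x 1 = x1 \<and>
           (\<forall>n\<ge>1. l n = x n * (s1 n * x (n + 1) + s0 n * x n + sm n * x (n - 1)) + kappa n * x n) \<and>
           (\<forall>n\<ge>1. x n > 0)"
  using main[OF assms] by blast

end
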